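(* Let $\mathcal{F}$ be a real inner product space with inner product $\langle\cdot,\cdot\rangle$, let $\mathcal{K}:\mathcal{F}\to\mathcal{F}$ be linear, and let $\mathcal{S}\subset\mathcal{F}$ be a subspace with $\dim\mathcal{S}=\dim\mathcal{K}\mathcal{S}=s$. Let $0\le\theta_1\le\dots\le\theta_s\le\pi/2$ be the principal angles between $\mathcal{S}$ and $\mathcal{K}\mathcal{S}$ in increasing order, with principal vectors $u^{\mathcal{S}}_1,\dots,u^{\mathcal{S}}_s\in\mathcal{S}$ and $\mathcal{K}v^{\mathcal{K}\mathcal{S}}_1,\dots,\mathcal{K}v^{\mathcal{K}\mathcal{S}}_s\in\mathcal{K}\mathcal{S}$ (orthonormal families with $\langle u^{\mathcal{S}}_i,\mathcal{K}v^{\mathcal{K}\mathcal{S}}_j\rangle=\delta_{ij}\cos\theta_i$). Let $\Lambda_{\cos}=\mathrm{diag}(\cos\theta_1,\dots,\cos\theta_s)$ and $\Lambda_{\sin}=\mathrm{diag}(\sin\theta_1,\dots,\sin\theta_s)$. Let $\mathcal{S}^{\mathrm{new}}=\mathrm{span}(u^{\mathcal{S}}_1,\dots,u^{\mathcal{S}}_{s-1})$, so $\mathcal{K}\mathcal{S}^{\mathrm{new}}=\mathrm{span}(\mathcal{K}u^{\mathcal{S}}_1,\dots,\mathcal{K}u^{\mathcal{S}}_{s-1})$. Let $WR=[\mathcal{K}u^{\mathcal{S}}_1,\dots,\mathcal{K}u^{\mathcal{S}}_s]$ be a thin QR decomposition, with $W=[w_1,\dots,w_s]$ orthonormal elements of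 $\mathcal{F}$ and $R\in\mathbb{R}^{s\times s}$ upper triangular, and set $\omega=w_s$. Write $\omega=\sum_{i=1}^s d^{\omega}_i\,\mathcal{K}v^{\mathcal{K}\mathcal{S}}_i$ and $d^\omega=[d^\omega_1,\dots,d^\omega_s]^\top$. Define $N_1=\Lambda_{\sin}^2+\Lambda_{\cos}d^\omega(\Lambda_{\cos}d^\omega)^\top\in\mathbb{R}^{s\times s}$, and let $\tilde N_1\in\mathbb{R}^{(s-1)\times(s-1)}$ be obtained by deleting the last row and column of $N_1$. Let $(\lambda_\alpha,z_\alpha)_{\alpha=1}^{s-1}$ be the eigenpairs of $\tilde N_1$ with $\lambda_1\le\dots\le\lambda_{s-1}$ and $z_\alpha$ orthonormal. Then, for every $\alpha=1,\dots,s-1$, $$\sin^2\theta_\alpha(\mathcal{S}^{\mathrm{new}},\mathcal{K}\mathcal{S}^{\mathrm{new}})=\lambda_\alpha,\qquad u^{\mathcal{S}^{\mathrm{new}}}_\alpha=\mathcal{U}_{s-1}z_\alpha,$$ where $\mathcal{U}_{s-1}=[u^{\mathcal{S}}_1,\dots,u^{\mathcal{S}}_{s-1}]$ (so $\mathcal{U}_{s-1}z_\alpha=\sum_{j=1}^{s-1}(z_\alpha)_j u^{\mathcal{S}}_j$) and $\{u^{\mathcal{S}^{\mathrm{new}}}_\alpha\}$ are principal vectors of $\mathcal{S}^{\mathrm{new}}$ with respect to $\mathcal{K}\mathcal{S}^{\mathrm{new}}$.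
   Context: Principal angles and vectors between subspaces $\mathcal{U},\mathcal{V}$ of an inner product space with $k=\min\{\dim\mathcal{U},\dim\mathcal{V}\}$: angles $0\le\theta_1\le\dots\le\theta_k\le\pi/2$ defined recursively by $\cos\theta_j=\max|\langle u,v\rangle|$ over unit $u\in\mathcal{U}$, $v\in\mathcal{V}$ with $u$ orthogonal to $u_1,\dots,u_{j-1}$ and $v$ orthogonal to $v_1,\dots,v_{j-1}$; the maximizers $(u_j,v_j)$ are the $j$-th pair of principal vectors. A thin QR decomposition of a tuple $[f_1,\dots,f_s]$ of elements of $\mathcal{F}$ is $f_j=\sum_{i\le j}R_{ij}w_i$ with $w_1,\dots,w_s$ orthonormal (Gram–Schmidt). *)

theory Defs
  imports "HOL-Analysis.Analysis"
begin

definition principal_system ::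
  "'a::real_inner set \<Rightarrow> 'a set \<Rightarrow> nat \<Rightarrow> (nat \<Rightarrow> 'a) \<Rightarrow> (nat \<Rightarrow> 'a) \<Rightarrow> (nat \<Rightarrow> real) \<Rightarrow> bool"
where
  "principal_system U V k u v \<theta> \<longleftrightarrow>
     (\<forall>j\<in>{1..k}.
        u j \<in> U \<and> v j \<in> V \<and> norm (u j) = 1 \<and> norm (v j) = 1 \<and>
        (\<forall>i\<in>{1..<j}. u j \<bullet> u i = 0 \<and> v j \<bullet> v i = 0) \<and>
        0 \<le> \<theta> j \<and> \<theta> j \<le> pi / 2 \<and>
        u j \<bullet> v j = cos (\<theta> j) \<and>
        (\<forall>x\<in>U. \<forall>y\<in>V. norm x = 1 \<longrightarrow> norm y = 1 \<longrightarrow>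
            (\<forall>i\<in>{1..<j}. x \<bullet> u i = 0 \<and> y \<bullet> v i = 0) \<longrightarrow>
            \<bar>x \<bullet> y\<bar> \<le> cos (\<theta> j)))"

end

theory Submission
  imports Defs
begin


definition onf :: "(nat \<Rightarrow> 'a::real_inner) \<Rightarrow> nat set \<Rightarrow> bool" where
  "onf e I \<longleftrightarrow> (\<forall>i\<in>I. \<forall>j\<in>I. e i \<bullet> e j = (if i = j then 1 else 0))"

lemma onf_inj: "onf e I \<Longrightarrow> inj_on e I"
  unfolding onf_def inj_on_def by (metis one_neq_zero)

lemma onf_card: "onf e I \<Longrightarrow> card (e ` I) = card I"
  using onf_inj card_image by blast

lemma onf_indep: "onf e I \<Longrightarrow> independent (e ` I)"
proof (rule pairwise_orthogonal_independent)
  assume o: "onf e I"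
  show "pairwise orthogonal (e ` I)"
    unfolding pairwise_def orthogonal_def using o unfolding onf_def by auto
  show "0 \<notin> e ` I"
  proof
    assume "0 \<in> e ` I"
    then obtain i where "i \<in> I" "e i = 0" by auto
    with o show False unfolding onf_def by force
  qed
qed

lemma onf_sum_inner:
  assumes "onf e I" "finite I" "j \<in> I"
  shows "(\<Sum>i\<in>I. c i *\<^sub>R e i) \<bullet> e j = c j"
proof -
  have "(\<Sum>i\<in>I. c i *\<^sub>R e i) \<bullet> e j = (\<Sum>i\<in>I. c i * (if i = j then 1 else 0))"
    using assms unfolding onf_def by (simp add: inner_sum_left)
  also have "\<dots> = (\<Sum>i\<in>I. if i = j then c i else 0)" by (rule sum.cong) auto
  also have "\<dots> = c j" using assms by (simp add: sum.delta)
  finally show ?thesis .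
qed

lemma onf_expand:
  assumes o: "onf e I" and fin: "finite I" and y: "y \<in> span (e ` I)"
  shows "y = (\<Sum>i\<in>I. (y \<bullet> e i) *\<^sub>R e i)"
proof -
  define r where "r = y - (\<Sum>i\<in>I. (y \<bullet> e i) *\<^sub>R e i)"
  have rs: "r \<in> span (e ` I)" unfolding r_def
    by (intro span_diff y span_sum span_scale span_base) auto
  have "orthogonal r x" if xI: "x \<in> e ` I" for x
  proof -
    obtain j where j: "j \<in> I" "x = e j" using xI by blast
    show ?thesis unfolding orthogonal_def r_def j
      using onf_sum_inner[OF o fin j(1), of "\<lambda>i. y \<bullet> e i"] by (simp add: inner_diff_left)
  qed
  then have "orthogonal r r" using orthogonal_to_span[OF rs] orthogonal_commute by blast
  then have "r = 0" by (simp add: orthogonal_def)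
  then show ?thesis unfolding r_def by simp
qed

lemma onf_parseval:
  assumes o: "onf e I" and fin: "finite I" and y: "y \<in> span (e ` I)"
  shows "y \<bullet> x = (\<Sum>i\<in>I. (y \<bullet> e i) * (x \<bullet> e i))"
proof -
  have "y \<bullet> x = (\<Sum>i\<in>I. (y \<bullet> e i) *\<^sub>R e i) \<bullet> x" using onf_expand[OF assms] by simp
  also have "\<dots> = (\<Sum>i\<in>I. (y \<bullet> e i) * (x \<bullet> e i))" by (simp add: inner_sum_left inner_commute[of x])
  finally show ?thesis .
qed

lemma onf_bessel:
  assumes o: "onf e I" and fin: "finite I"
  shows "(\<Sum>i\<in>I. (x \<bullet> e i)\<^sup>2) \<le> x \<bullet> x"
proof -
  define p where "p = (\<Sum>i\<in>I. (x \<bullet> e i) *\<^sub>R e i)"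
  have ps: "p \<in> span (e ` I)" unfolding p_def by (intro span_sum span_scale span_base) auto
  have pe: "p \<bullet> e j = x \<bullet> e j" if "j \<in> I" for j
    unfolding p_def using onf_sum_inner[OF o fin that] .
  have pp: "p \<bullet> p = (\<Sum>i\<in>I. (x \<bullet> e i)\<^sup>2)"
    using onf_parseval[OF o fin ps, of p] pe by (simp add: power2_eq_square)
  have px: "p \<bullet> x = (\<Sum>i\<in>I. (x \<bullet> e i)\<^sup>2)"
    using onf_parseval[OF o fin ps, of x] pe by (simp add: power2_eq_square)
  have "0 \<le> (x - p) \<bullet> (x - p)" by simp
  also have "\<dots> = x \<bullet> x - 2 * (p \<bullet> x) + p \<bullet> p" by (simp add: inner_diff inner_commute)
  finally show ?thesis using pp px by simp
qed

lemma span_fill: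
  fixes A T :: "'a::real_vector set"
  assumes ind: "independent A" and fA: "finite A" and AV: "A \<subseteq> V"
    and VT: "V \<subseteq> span T" and fT: "finite T" and c: "card T \<le> card A"
  shows "V \<subseteq> span A"
proof
  fix x assume x: "x \<in> V"
  show "x \<in> span A"
  proof (rule ccontr)
    assume nx: "x \<notin> span A"
    then have "independent (insert x A)" using ind by (simp add: independent_insert)
    moreover have "insert x A \<subseteq> span T" using x AV VT by auto
    ultimately have "card (insert x A) \<le> card T" using independent_span_bound[OF fT] by blast
    moreover have "x \<notin> A" using nx span_base by blast
    ultimately show False using c fA by simp
  qed
qed

lemma rearr:
  fixes m W :: "nat \<Rightarrow> real"
  assumes mdec: "\<forall>a\<in>{1..n}. \<forall>b\<in>{1..n}. a \<le> b \<longrightarrow> m b \<le> m a"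
    and W0: "\<forall>g\<in>{1..n}. 0 \<le> W g" and W1: "\<forall>g\<in>{1..n}. W g \<le> 1"
    and Ws: "(\<Sum>g=1..n. W g) = real j" and j1: "1 \<le> j" and jn: "j \<le> n"
  shows "(\<Sum>g=1..n. m g * W g) \<le> (\<Sum>g=1..j. m g)"
proof -
  have key: "(\<Sum>g=1..n. (m g - m j) * (W g - (if g \<le> j then 1 else 0))) \<le> 0"
  proof (rule sum_nonpos)
    fix g assume g: "g \<in> {1..n}"
    have jI: "j \<in> {1..n}" using j1 jn by auto
    show "(m g - m j) * (W g - (if g \<le> j then 1 else 0)) \<le> 0"
    proof (cases "g \<le> j")
      case True
      then have "m j \<le> m g" using mdec g jI by blast
      moreover have "W g \<le> 1" using W1 g by blast
      ultimately show ?thesis using True by (simp add: mult_nonneg_nonpos)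
    next
      case False
      then have "m g \<le> m j" using mdec g jI by auto
      moreover have "0 \<le> W g" using W0 g by blast
      ultimately show ?thesis using False by (simp add: mult_nonpos_nonneg)
    qed
  qed
  have fil: "{1..n} \<inter> {g. g \<le> j} = {1..j}" using jn by auto
  have s1: "(\<Sum>g=1..n. (if g \<le> j then m g else 0)) = (\<Sum>g=1..j. m g)"
    by (simp only: sum.If_cases[OF finite_atLeastAtMost] fil) simp
  have s2: "(\<Sum>g=1..n. (if g \<le> j then 1 else 0::real)) = real j"
    by (simp only: sum.If_cases[OF finite_atLeastAtMost] fil) simp
  have "(\<Sum>g=1..n. (m g - m j) * (W g - (if g \<le> j then 1 else 0)))
      = (\<Sum>g=1..n. m g * W g - (if g \<le> j then m g else 0) - m j * W g + m j * (if g \<le> j then 1 else 0))"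
    by (rule sum.cong) (auto simp: algebra_simps)
  also have "\<dots> = (\<Sum>g=1..n. m g * W g) - (\<Sum>g=1..n. (if g \<le> j then m g else 0)) - m j * (\<Sum>g=1..n. W g) + m j * (\<Sum>g=1..n. (if g \<le> j then 1 else 0::real))"
    by (simp only: sum.distrib sum_subtractf sum_distrib_left)
  also have "\<dots> = (\<Sum>g=1..n. m g * W g) - (\<Sum>g=1..j. m g) - m j * real j + m j * real j"
    by (simp only: s1 s2 Ws)
  finally show ?thesis using key by simp
qed

lemma kyfan:
  fixes e x :: "nat \<Rightarrow> 'a::real_inner"
  assumes oe: "onf e {1..n}" and ox: "onf x {1..j}" and jn: "j \<le> n"
    and xs: "\<forall>i\<in>{1..j}. x i \<in> span (e ` {1..n})"
    and mdec: "\<forall>a\<in>{1..n}. \<forall>b\<in>{1..n}. a \<le> b \<longrightarrow> m b \<le> m a"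
    and Q: "\<forall>i\<in>{1..j}. Q (x i) = (\<Sum>g=1..n. m g * (x i \<bullet> e g)\<^sup>2)"
  shows "(\<Sum>i=1..j. Q (x i)) \<le> (\<Sum>g=1..j. m g)"
proof (cases "j = 0")
  case True then show ?thesis by simp
next
  case False
  define W where "W g = (\<Sum>i=1..j. (x i \<bullet> e g)\<^sup>2)" for g
  have "(\<Sum>i=1..j. Q (x i)) = (\<Sum>i=1..j. \<Sum>g=1..n. m g * (x i \<bullet> e g)\<^sup>2)"
    using Q by simp
  also have "\<dots> = (\<Sum>g=1..n. m g * W g)"
    unfolding W_def sum_distrib_left by (rule sum.swap)
  also have "\<dots> \<le> (\<Sum>g=1..j. m g)"
  proof (rule rearr[OF mdec])
    show "\<forall>g\<in>{1..n}. 0 \<le> W g" unfolding W_def by (simp add: sum_nonneg)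
    show "\<forall>g\<in>{1..n}. W g \<le> 1"
    proof
      fix g assume g: "g \<in> {1..n}"
      have "W g = (\<Sum>i=1..j. (e g \<bullet> x i)\<^sup>2)" unfolding W_def by (simp add: inner_commute)
      also have "\<dots> \<le> e g \<bullet> e g" by (rule onf_bessel[OF ox]) simp
      also have "\<dots> = 1" using oe g unfolding onf_def by simp
      finally show "W g \<le> 1" .
    qed
    have "(\<Sum>g=1..n. W g) = (\<Sum>i=1..j. \<Sum>g=1..n. (x i \<bullet> e g)\<^sup>2)"
      unfolding W_def by (rule sum.swap)
    also have "\<dots> = (\<Sum>i=1..j. x i \<bullet> x i)"
      by (rule sum.cong[OF refl]) (use onf_parseval[OF oe _ , of "x _" "x _"] xs in \<open>auto simp: power2_eq_square\<close>)
    also have "\<dots> = (\<Sum>i=1..j. 1)" using ox unfolding onf_def by simp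
    finally show "(\<Sum>g=1..n. W g) = real j" by simp
    show "1 \<le> j" using False by simp
    show "j \<le> n" by fact
  qed
  finally show ?thesis .
qed

lemma stat_real:
  fixes c N a :: real
  assumes c0: "0 \<le> c" and N0: "0 \<le> N"
    and H: "\<And>t. (c + t * a)\<^sup>2 \<le> c\<^sup>2 * (1 + t\<^sup>2 * N)"
  shows "a = 0"
proof (rule ccontr)
  assume a0: "a \<noteq> 0"
  define h where "h = 1 / (c * N + 1)"
  have cN: "0 \<le> c * N" using c0 N0 by simp
  have h0: "0 < h" unfolding h_def using cN by simp
  have hc: "h * (c * N + 1) = 1" unfolding h_def using cN by simp
  have aa: "0 < a\<^sup>2" using a0 by simp
  have "(c + (a * h) * a)\<^sup>2 \<le> c\<^sup>2 * (1 + (a * h)\<^sup>2 * N)" by (rule H)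
  then have E1: "c\<^sup>2 + 2 * c * (h * a\<^sup>2) + (h * a\<^sup>2)\<^sup>2 \<le> c\<^sup>2 + c\<^sup>2 * N * h * (h * a\<^sup>2)"
    by (simp add: power2_eq_square algebra_simps)
  have pos: "0 < h * a\<^sup>2" using h0 aa by simp
  from E1 have "(h * a\<^sup>2) * (2 * c + h * a\<^sup>2) \<le> (h * a\<^sup>2) * (c\<^sup>2 * N * h)"
    by (simp add: power2_eq_square algebra_simps)
  then have 1: "2 * c + h * a\<^sup>2 \<le> c\<^sup>2 * N * h" by (simp only: mult_le_cancel_left_pos[OF pos])
  have e2: "c\<^sup>2 * N * h = c * ((c * N) * h)" by (simp add: power2_eq_square)
  have e3: "(c * N) * h \<le> 1" using hc h0 by (simp add: algebra_simps)
  have "c * ((c * N) * h) \<le> c * 1" using e3 c0 by (rule mult_left_mono)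
  with e2 have "c\<^sup>2 * N * h \<le> c" by linarith
  with 1 have "c + h * a\<^sup>2 \<le> 0" by simp
  with c0 pos show False by simp
qed

lemma diag_form:
  fixes P :: "'a::real_inner \<Rightarrow> 'a"
  assumes PV: "\<forall>x\<in>U. P x \<in> V" and Pin: "\<forall>x\<in>U. \<forall>y\<in>V. x \<bullet> y = P x \<bullet> y"
    and oe: "onf e {1..n}" and eU: "\<forall>i\<in>{1..n}. e i \<in> U" and Ue: "U \<subseteq> span (e ` {1..n})"
    and Pe: "\<forall>i\<in>{1..n}. \<forall>k\<in>{1..n}. P (e i) \<bullet> P (e k) = (if i = k then m i else 0)"
    and x: "x \<in> U"
  shows "P x \<bullet> P x = (\<Sum>g=1..n. m g * (x \<bullet> e g)\<^sup>2)"
proof -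
  have xs: "x \<in> span (e ` {1..n})" using x Ue by blast
  have c1: "x \<bullet> P (e k) = (x \<bullet> e k) * m k" if k: "k \<in> {1..n}" for k
  proof -
    have "x \<bullet> P (e k) = (\<Sum>i=1..n. (x \<bullet> e i) * (P (e k) \<bullet> e i))"
      by (rule onf_parseval[OF oe _ xs]) simp
    also have "\<dots> = (\<Sum>i=1..n. (x \<bullet> e i) * (if i = k then m k else 0))"
    proof (rule sum.cong[OF refl])
      fix i assume i: "i \<in> {1..n}"
      have "P (e k) \<bullet> e i = e i \<bullet> P (e k)" by (simp add: inner_commute)
      also have "\<dots> = P (e i) \<bullet> P (e k)" using Pin eU PV i k by blast
      finally show "(x \<bullet> e i) * (P (e k) \<bullet> e i) = (x \<bullet> e i) * (if i = k then m k else 0)"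
        using Pe i k by auto
    qed
    also have "\<dots> = (\<Sum>i=1..n. (if i = k then (x \<bullet> e i) * m k else 0))"
      by (rule sum.cong) auto
    also have "\<dots> = (x \<bullet> e k) * m k" using k by (simp add: sum.delta)
    finally show ?thesis .
  qed
  have "P x \<bullet> P x = x \<bullet> P x" using Pin PV x by metis
  also have "\<dots> = (\<Sum>i=1..n. (x \<bullet> e i) * (P x \<bullet> e i))"
    by (rule onf_parseval[OF oe _ xs]) simp
  also have "\<dots> = (\<Sum>i=1..n. (x \<bullet> e i) * ((x \<bullet> e i) * m i))"
  proof (rule sum.cong[OF refl])
    fix i assume i: "i \<in> {1..n}"
    have "P x \<bullet> e i = e i \<bullet> P x" by (simp add: inner_commute)
    also have "\<dots> = P (e i) \<bullet> P x" using Pin eU PV i x by blast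
    also have "\<dots> = P x \<bullet> P (e i)" by (simp add: inner_commute)
    also have "\<dots> = x \<bullet> P (e i)" using Pin PV x eU i by metis
    also have "\<dots> = (x \<bullet> e i) * m i" using c1 i by blast
    finally show "(x \<bullet> e i) * (P x \<bullet> e i) = (x \<bullet> e i) * ((x \<bullet> e i) * m i)" by simp
  qed
  also have "\<dots> = (\<Sum>g=1..n. m g * (x \<bullet> e g)\<^sup>2)"
    by (rule sum.cong) (auto simp: power2_eq_square)
  finally show ?thesis .
qed

lemma onf_ext:
  fixes g b :: "nat \<Rightarrow> 'a::real_inner"
  assumes subV: "subspace V" and og: "onf g {1..n}" and Vg: "V = span (g ` {1..n})"
    and ob: "onf b {1..k}" and bV: "\<forall>i\<in>{1..k}. b i \<in> V" and kn: "k < n"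
  shows "\<exists>y\<in>V. norm y = 1 \<and> (\<forall>i\<in>{1..k}. y \<bullet> b i = 0)"
proof -
  have "\<exists>i\<in>{1..n}. g i \<notin> span (b ` {1..k})"
  proof (rule ccontr)
    assume "\<not> ?thesis"
    then have "g ` {1..n} \<subseteq> span (b ` {1..k})" by blast
    then have "card (g ` {1..n}) \<le> card (b ` {1..k})"
      using independent_span_bound[OF finite_imageI[OF finite_atLeastAtMost] onf_indep[OF og]] by simp
    then show False using onf_card[OF og] onf_card[OF ob] kn by simp
  qed
  then obtain i where i: "i \<in> {1..n}" "g i \<notin> span (b ` {1..k})" by blast
  define r where "r = g i - (\<Sum>l=1..k. (g i \<bullet> b l) *\<^sub>R b l)"
  have giV: "g i \<in> V" unfolding Vg by (rule span_base) (use i(1) in simp)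
  have rV: "r \<in> V" unfolding r_def
  proof (rule subspace_diff[OF subV giV])
    show "(\<Sum>l=1..k. (g i \<bullet> b l) *\<^sub>R b l) \<in> V"
      using bV by (intro subspace_sum[OF subV] subspace_scale[OF subV]) simp
  qed
  have r0: "r \<noteq> 0"
  proof
    assume "r = 0"
    then have "g i = (\<Sum>l=1..k. (g i \<bullet> b l) *\<^sub>R b l)" unfolding r_def by simp
    moreover have "(\<Sum>l=1..k. (g i \<bullet> b l) *\<^sub>R b l) \<in> span (b ` {1..k})"
      by (intro span_sum span_scale span_base) auto
    ultimately show False using i(2) by argo
  qed
  have rb: "r \<bullet> b l = 0" if l: "l \<in> {1..k}" for l
    unfolding r_def using onf_sum_inner[OF ob _ l, of "\<lambda>l. g i \<bullet> b l"] by (simp add: inner_diff_left)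
  show ?thesis
  proof (intro bexI conjI ballI)
    show "norm ((1 / norm r) *\<^sub>R r) = 1" using r0 by simp
    show "(1 / norm r) *\<^sub>R r \<in> V" by (rule subspace_scale[OF subV rV])
    fix l assume "l \<in> {1..k}" then show "((1 / norm r) *\<^sub>R r) \<bullet> b l = 0" using rb by simp
  qed
qed


lemma onf_mono: "onf e I \<Longrightarrow> J \<subseteq> I \<Longrightarrow> onf e J"
  unfolding onf_def by blast

lemma onf_from_ps:
  assumes n1: "\<forall>j\<in>{1..n}. norm (u j) = 1" and o: "\<forall>j\<in>{1..n}. \<forall>i\<in>{1..<j}. u j \<bullet> u i = 0"
  shows "onf u {1..n}"
  unfolding onf_def
proof (intro ballI)
  fix i j assume i: "i \<in> {1..n}" and j: "j \<in> {1..n}"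
  show "u i \<bullet> u j = (if i = j then 1 else 0)"
  proof (cases "i = j")
    case True
    then show ?thesis using n1 i by (simp add: power2_norm_eq_inner[symmetric])
  next
    case False
    then show ?thesis
    proof (cases "i < j")
      case True
      then have "i \<in> {1..<j}" using i by auto
      then have "u j \<bullet> u i = 0" using o j by blast
      then show ?thesis using False by (simp add: inner_commute)
    next
      case False2: False
      then have "j < i" using False by simp
      then show ?thesis using o i j False by auto
    qed
  qed
qed

lemma ps_unique:
  fixes P :: "'a::real_inner \<Rightarrow> 'a"
  assumes subU: "subspace U" and subV: "subspace V"
    and PV: "\<forall>x\<in>U. P x \<in> V" and Pin: "\<forall>x\<in>U. \<forall>y\<in>V. x \<bullet> y = P x \<bullet> y"
    and of: "onf f {1..n}" and fU: "\<forall>i\<in>{1..n}. f i \<in> U" and Uf: "U \<subseteq> span (f ` {1..n})"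
    and Pf: "\<forall>i\<in>{1..n}. \<forall>k\<in>{1..n}. P (f i) \<bullet> P (f k) = (if i = k then \<mu> i else 0)"
    and mdec: "\<forall>a\<in>{1..n}. \<forall>b\<in>{1..n}. a \<le> b \<longrightarrow> \<mu> b \<le> \<mu> a"
    and ps: "principal_system U V n u v \<theta>"
  shows "\<forall>\<alpha>\<in>{1..n}. (cos (\<theta> \<alpha>))\<^sup>2 = \<mu> \<alpha>"
proof -
  define c where "c i = cos (\<theta> i)" for i
  have uU: "\<forall>j\<in>{1..n}. u j \<in> U" and vV: "\<forall>j\<in>{1..n}. v j \<in> V"
    and un: "\<forall>j\<in>{1..n}. norm (u j) = 1" and vn: "\<forall>j\<in>{1..n}. norm (v j) = 1"
    and uo: "\<forall>j\<in>{1..n}. \<forall>i\<in>{1..<j}. u j \<bullet> u i = 0"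
    and vo: "\<forall>j\<in>{1..n}. \<forall>i\<in>{1..<j}. v j \<bullet> v i = 0"
    and th0: "\<forall>j\<in>{1..n}. 0 \<le> \<theta> j" and thp: "\<forall>j\<in>{1..n}. \<theta> j \<le> pi / 2"
    and uv: "\<forall>j\<in>{1..n}. u j \<bullet> v j = c j"
    and mx: "\<forall>j\<in>{1..n}. \<forall>x\<in>U. \<forall>y\<in>V. norm x = 1 \<longrightarrow> norm y = 1 \<longrightarrow>
            (\<forall>i\<in>{1..<j}. x \<bullet> u i = 0 \<and> y \<bullet> v i = 0) \<longrightarrow> \<bar>x \<bullet> y\<bar> \<le> c j"
    using ps unfolding principal_system_def c_def by auto
  have c0: "0 \<le> c j" if "j \<in> {1..n}" for j
  proof -
    have "0 \<le> \<theta> j" "\<theta> j \<le> pi / 2" using th0 thp that by auto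
    moreover have "- (pi / 2) \<le> 0" using pi_gt_zero by simp
    ultimately show ?thesis unfolding c_def by (intro cos_ge_zero) auto
  qed
  have ou: "onf u {1..n}" by (rule onf_from_ps[OF un uo])
  have ov: "onf v {1..n}" by (rule onf_from_ps[OF vn vo])
  have hom: "\<bar>x \<bullet> y\<bar> \<le> c j * norm x * norm y"
    if j: "j \<in> {1..n}" and x: "x \<in> U" and y: "y \<in> V"
      and xo: "\<forall>i\<in>{1..<j}. x \<bullet> u i = 0" and yo: "\<forall>i\<in>{1..<j}. y \<bullet> v i = 0" for j x y
  proof (cases "x = 0 \<or> y = 0")
    case True then show ?thesis by auto
  next
    case False
    then have nx: "0 < norm x" and ny: "0 < norm y" by auto
    define x' where "x' = (1 / norm x) *\<^sub>R x"
    define y' where "y' = (1 / norm y) *\<^sub>R y"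
    have "x' \<in> U" unfolding x'_def by (rule subspace_scale[OF subU x])
    moreover have "y' \<in> V" unfolding y'_def by (rule subspace_scale[OF subV y])
    moreover have "norm x' = 1" "norm y' = 1" unfolding x'_def y'_def using nx ny by auto
    moreover have "\<forall>i\<in>{1..<j}. x' \<bullet> u i = 0 \<and> y' \<bullet> v i = 0"
      unfolding x'_def y'_def using xo yo by simp
    ultimately have "\<bar>x' \<bullet> y'\<bar> \<le> c j" using mx j by blast
    moreover have "\<bar>x' \<bullet> y'\<bar> = \<bar>x \<bullet> y\<bar> / (norm x * norm y)"
      unfolding x'_def y'_def using nx ny by (simp add: abs_mult)
    ultimately have "\<bar>x \<bullet> y\<bar> / (norm x * norm y) \<le> c j" by simp
    then show ?thesis using nx ny by (simp add: divide_le_eq mult.assoc)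
  qed
  have stat: "x \<bullet> v j = 0"
    if j: "j \<in> {1..n}" and x: "x \<in> U" and xo: "\<forall>i\<in>{1..j}. x \<bullet> u i = 0" for j x
  proof -
    have xu: "x \<bullet> u j = 0" using xo j by auto
    have uu: "u j \<bullet> u j = 1" using ou j unfolding onf_def by auto
    have "(c j + t * (x \<bullet> v j))\<^sup>2 \<le> (c j)\<^sup>2 * (1 + t\<^sup>2 * (x \<bullet> x))" for t
    proof -
      define xt where "xt = u j + t *\<^sub>R x"
      have txU: "t *\<^sub>R x \<in> U" by (rule subspace_scale[OF subU x])
      have ujU: "u j \<in> U" using uU j by blast
      have xtU: "xt \<in> U" unfolding xt_def by (rule subspace_add[OF subU ujU txU])
      have xto: "\<forall>i\<in>{1..<j}. xt \<bullet> u i = 0"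
      proof
        fix i assume i: "i \<in> {1..<j}"
        have "u j \<bullet> u i = 0" using uo j i by blast
        moreover have "x \<bullet> u i = 0" using xo i by simp
        ultimately show "xt \<bullet> u i = 0" unfolding xt_def by (simp add: inner_add_left)
      qed
      have vjV: "v j \<in> V" using vV j by blast
      have vjo: "\<forall>i\<in>{1..<j}. v j \<bullet> v i = 0" using vo j by blast
      have "\<bar>xt \<bullet> v j\<bar> \<le> c j * norm xt * norm (v j)"
        by (rule hom[OF j xtU vjV xto vjo])
      moreover have "xt \<bullet> v j = c j + t * (x \<bullet> v j)"
        unfolding xt_def using uv j by (simp add: inner_add_left)
      moreover have "norm (v j) = 1" using vn j by blast
      ultimately have h1: "\<bar>c j + t * (x \<bullet> v j)\<bar> \<le> c j * norm xt" by simp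
      have "xt \<bullet> xt = u j \<bullet> u j + t * (u j \<bullet> x) + t * (x \<bullet> u j) + t * t * (x \<bullet> x)"
        unfolding xt_def by (simp add: inner_add_left inner_add_right algebra_simps)
      also have "\<dots> = 1 + t\<^sup>2 * (x \<bullet> x)"
        using xu uu by (simp add: inner_commute[of "u j" x] power2_eq_square)
      finally have nxt: "(norm xt)\<^sup>2 = 1 + t\<^sup>2 * (x \<bullet> x)" by (simp add: power2_norm_eq_inner)
      have "(c j + t * (x \<bullet> v j))\<^sup>2 = \<bar>c j + t * (x \<bullet> v j)\<bar>\<^sup>2" by simp
      also have "\<dots> \<le> (c j * norm xt)\<^sup>2"
        by (rule power_mono[OF h1]) simp
      also have "\<dots> = (c j)\<^sup>2 * (1 + t\<^sup>2 * (x \<bullet> x))" by (simp only: power_mult_distrib nxt)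
      finally show ?thesis .
    qed
    then show ?thesis using stat_real[OF c0[OF j], of "x \<bullet> x"] by simp
  qed
  have Pu: "P (u j) = c j *\<^sub>R v j" if j: "j \<in> {1..n}" for j
  proof -
    have PuV: "P (u j) \<in> V" using PV uU j by blast
    have Puo: "\<forall>i\<in>{1..<j}. P (u j) \<bullet> v i = 0"
    proof
      fix i assume i: "i \<in> {1..<j}"
      have iI: "i \<in> {1..n}" using i j by auto
      have "P (u j) \<bullet> v i = u j \<bullet> v i" using Pin uU vV j iI by metis
      also have "\<dots> = 0"
      proof (rule stat[OF iI])
        show "u j \<in> U" using uU j by blast
        show "\<forall>k\<in>{1..i}. u j \<bullet> u k = 0" using uo j i by auto
      qed
      finally show "P (u j) \<bullet> v i = 0" .
    qed
    have "\<bar>u j \<bullet> P (u j)\<bar> \<le> c j * norm (u j) * norm (P (u j))"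
      by (rule hom[OF j _ PuV]) (use uU j uo Puo in auto)
    moreover have "u j \<bullet> P (u j) = (norm (P (u j)))\<^sup>2"
      using Pin uU PuV j by (metis power2_norm_eq_inner)
    ultimately have "(norm (P (u j)))\<^sup>2 \<le> c j * norm (P (u j))" using un j by simp
    then have pp: "norm (P (u j)) * norm (P (u j)) \<le> c j * norm (P (u j))" by (simp add: power2_eq_square)
    have le: "norm (P (u j)) \<le> c j"
    proof (cases "norm (P (u j)) = 0")
      case True then show ?thesis using c0[OF j] by simp
    next
      case False
      then have "0 < norm (P (u j))" by simp
      then show ?thesis using pp by (rule mult_right_le_imp_le[rotated])
    qed
    have Pv: "P (u j) \<bullet> v j = c j" using Pin uU vV j uv by metis
    have "c j \<le> norm (P (u j)) * norm (v j)" using norm_cauchy_schwarz[of "P (u j)" "v j"] Pv by simp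
    then have eqn: "norm (P (u j)) = c j" using le vn j by simp
    have "(P (u j) - c j *\<^sub>R v j) \<bullet> (P (u j) - c j *\<^sub>R v j)
        = P (u j) \<bullet> P (u j) - 2 * c j * (P (u j) \<bullet> v j) + (c j)\<^sup>2 * (v j \<bullet> v j)"
      by (simp add: inner_diff_left inner_diff_right inner_commute[of "v j" "P (u j)"] algebra_simps power2_eq_square)
    also have "P (u j) \<bullet> P (u j) = (c j)\<^sup>2" using eqn power2_norm_eq_inner[of "P (u j)"] by simp
    also have "v j \<bullet> v j = 1" using vn j power2_norm_eq_inner[of "v j"] by simp
    also have "(c j)\<^sup>2 - 2 * c j * (P (u j) \<bullet> v j) + (c j)\<^sup>2 * 1 = 0" using Pv by (simp add: power2_eq_square)
    finally show ?thesis by simp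
  qed
  have PuPu: "\<forall>i\<in>{1..n}. \<forall>k\<in>{1..n}. P (u i) \<bullet> P (u k) = (if i = k then (c i)\<^sup>2 else 0)"
    using Pu ov unfolding onf_def by (simp add: power2_eq_square)
  have cdec: "\<forall>a\<in>{1..n}. \<forall>b\<in>{1..n}. a \<le> b \<longrightarrow> (c b)\<^sup>2 \<le> (c a)\<^sup>2"
  proof (intro ballI impI)
    fix a b assume a: "a \<in> {1..n}" and b: "b \<in> {1..n}" and ab: "a \<le> b"
    show "(c b)\<^sup>2 \<le> (c a)\<^sup>2"
    proof (cases "a = b")
      case False
      then have "a < b" using ab by simp
      have ob: "\<forall>i\<in>{1..<a}. u b \<bullet> u i = 0 \<and> v b \<bullet> v i = 0"
      proof
        fix i assume "i \<in> {1..<a}"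
        then have "i \<in> {1..<b}" using \<open>a < b\<close> by auto
        then show "u b \<bullet> u i = 0 \<and> v b \<bullet> v i = 0" using uo vo b by blast
      qed
      have "u b \<in> U" "v b \<in> V" "norm (u b) = 1" "norm (v b) = 1" using uU vV un vn b by auto
      then have "\<bar>u b \<bullet> v b\<bar> \<le> c a" using mx a ob by blast
      then have "c b \<le> c a" using uv b by simp
      then show ?thesis using c0[OF b] by (simp add: power_mono)
    qed simp
  qed
  have Uu: "U \<subseteq> span (u ` {1..n})"
    by (rule span_fill[OF onf_indep[OF ou] _ _ Uf]) (use uU onf_card[OF of] onf_card[OF ou] in auto)
  have Qf: "P x \<bullet> P x = (\<Sum>g=1..n. \<mu> g * (x \<bullet> f g)\<^sup>2)" if "x \<in> U" for x
    by (rule diag_form[OF PV Pin of fU Uf Pf that])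
  have Qu: "P x \<bullet> P x = (\<Sum>g=1..n. (c g)\<^sup>2 * (x \<bullet> u g)\<^sup>2)" if "x \<in> U" for x
    by (rule diag_form[OF PV Pin ou uU Uu PuPu that])
  have eqs: "(\<Sum>i=1..j. (c i)\<^sup>2) = (\<Sum>i=1..j. \<mu> i)" if jn: "j \<le> n" for j
  proof (rule antisym)
    have "(\<Sum>i=1..j. P (u i) \<bullet> P (u i)) \<le> (\<Sum>i=1..j. \<mu> i)"
      by (rule kyfan[OF of onf_mono[OF ou] jn _ mdec, where Q = "\<lambda>x. P x \<bullet> P x"])
        (use jn uU Uf Qf in auto)
    moreover have "(\<Sum>i=1..j. P (u i) \<bullet> P (u i)) = (\<Sum>i=1..j. (c i)\<^sup>2)"
      using PuPu jn by (intro sum.cong) auto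
    ultimately show "(\<Sum>i=1..j. (c i)\<^sup>2) \<le> (\<Sum>i=1..j. \<mu> i)" by simp
    have "(\<Sum>i=1..j. P (f i) \<bullet> P (f i)) \<le> (\<Sum>i=1..j. (c i)\<^sup>2)"
      by (rule kyfan[OF ou onf_mono[OF of] jn _ cdec, where Q = "\<lambda>x. P x \<bullet> P x"])
        (use jn fU Uu Qu in auto)
    moreover have "(\<Sum>i=1..j. P (f i) \<bullet> P (f i)) = (\<Sum>i=1..j. \<mu> i)"
      using Pf jn by (intro sum.cong) auto
    ultimately show "(\<Sum>i=1..j. \<mu> i) \<le> (\<Sum>i=1..j. (c i)\<^sup>2)" by simp
  qed
  show ?thesis
  proof
    fix a assume a: "a \<in> {1..n}"
    then obtain b where b: "a = Suc b" by (cases a) auto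
    have "(\<Sum>i=1..Suc b. (c i)\<^sup>2) = (\<Sum>i=1..Suc b. \<mu> i)" by (rule eqs) (use a b in simp)
    moreover have "(\<Sum>i=1..b. (c i)\<^sup>2) = (\<Sum>i=1..b. \<mu> i)" by (rule eqs) (use a b in simp)
    ultimately have "(c a)\<^sup>2 = \<mu> a" using b by simp
    then show "(cos (\<theta> a))\<^sup>2 = \<mu> a" unfolding c_def .
  qed
qed



lemma ps_exists:
  fixes P :: "'a::real_inner \<Rightarrow> 'a"
  assumes subU: "subspace U" and subV: "subspace V"
    and PV: "\<forall>x\<in>U. P x \<in> V" and Pin: "\<forall>x\<in>U. \<forall>y\<in>V. x \<bullet> y = P x \<bullet> y"
    and of: "onf f {1..n}" and fU: "\<forall>i\<in>{1..n}. f i \<in> U" and Uf: "U \<subseteq> span (f ` {1..n})"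
    and Pf: "\<forall>i\<in>{1..n}. \<forall>k\<in>{1..n}. P (f i) \<bullet> P (f k) = (if i = k then \<mu> i else 0)"
    and mdec: "\<forall>a\<in>{1..n}. \<forall>b\<in>{1..n}. a \<le> b \<longrightarrow> \<mu> b \<le> \<mu> a"
    and og: "onf g {1..n}" and Vg: "V = span (g ` {1..n})"
  shows "\<exists>v \<theta>. principal_system U V n f v \<theta>"
proof -
  have PfV: "P (f a) \<in> V" if a: "a \<in> {1..n}" for a using PV fU a by blast
  have fPf: "f a \<bullet> P (f a) = \<mu> a" if a: "a \<in> {1..n}" for a
    using Pin fU PfV[OF a] Pf a by metis
  have nPf: "(norm (P (f a)))\<^sup>2 = \<mu> a" if a: "a \<in> {1..n}" for a
    using Pf a by (simp add: power2_norm_eq_inner)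
  have mu0: "0 \<le> \<mu> a" if a: "a \<in> {1..n}" for a
    using nPf[OF a] by (metis zero_le_power2)
  have nf: "norm (f a) = 1" if a: "a \<in> {1..n}" for a
    using of a unfolding onf_def by (simp add: norm_eq_sqrt_inner)
  have mu1: "\<mu> a \<le> 1" if a: "a \<in> {1..n}" for a
  proof -
    have "(norm (P (f a)))\<^sup>2 \<le> norm (f a) * norm (P (f a))"
      using norm_cauchy_schwarz[of "f a" "P (f a)"] fPf[OF a] nPf[OF a] by simp
    then have "norm (P (f a)) * norm (P (f a)) \<le> 1 * norm (P (f a))"
      using nf[OF a] by (simp add: power2_eq_square)
    then have pp: "norm (P (f a)) * norm (P (f a)) \<le> 1 * norm (P (f a))" .
    have "norm (P (f a)) \<le> 1"
    proof (cases "norm (P (f a)) = 0")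
      case True then show ?thesis by simp
    next
      case False
      then have "0 < norm (P (f a))" by simp
      then show ?thesis using pp by (rule mult_right_le_imp_le[rotated])
    qed
    then have "(norm (P (f a)))\<^sup>2 \<le> 1\<^sup>2" by (rule power_mono) simp
    then show ?thesis using nPf[OF a] by simp
  qed
  define good where "good v k \<longleftrightarrow> (\<forall>a\<in>{1..k}. v a \<in> V \<and> norm (v a) = 1 \<and>
      (\<forall>b\<in>{1..<a}. v a \<bullet> v b = 0) \<and> (0 < \<mu> a \<longrightarrow> v a = (1 / sqrt (\<mu> a)) *\<^sub>R P (f a)))" for v k
  have ex: "k \<le> n \<Longrightarrow> \<exists>v. good v k" for k
  proof (induction k)
    case 0 then show ?case unfolding good_def by simp
  next
    case (Suc k)
    then obtain v where gv: "good v k" by auto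
    have kI: "Suc k \<in> {1..n}" using Suc.prems by simp
    show ?case
    proof (cases "0 < \<mu> (Suc k)")
      case True
      define y where "y = (1 / sqrt (\<mu> (Suc k))) *\<^sub>R P (f (Suc k))"
      have yV: "y \<in> V" unfolding y_def by (rule subspace_scale[OF subV PfV[OF kI]])
      have ny: "norm y = 1"
      proof -
        have "norm (P (f (Suc k))) = sqrt (\<mu> (Suc k))" using nPf[OF kI] by (metis norm_ge_zero real_sqrt_unique)
        then show ?thesis unfolding y_def using True by simp
      qed
      have yo: "y \<bullet> v b = 0" if b: "b \<in> {1..<Suc k}" for b
      proof -
        have bI: "b \<in> {1..n}" and bk: "b \<in> {1..k}" using b kI by auto
        have "\<mu> (Suc k) \<le> \<mu> b" using mdec bI kI b by auto
        then have "0 < \<mu> b" using True by simp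
        then have "v b = (1 / sqrt (\<mu> b)) *\<^sub>R P (f b)" using gv bk unfolding good_def by blast
        moreover have "P (f (Suc k)) \<bullet> P (f b) = 0" using Pf bI kI b by auto
        ultimately show ?thesis unfolding y_def by simp
      qed
      have "good (v(Suc k := y)) (Suc k)"
        unfolding good_def
      proof
        fix a assume a: "a \<in> {1..Suc k}"
        show "(v(Suc k := y)) a \<in> V \<and> norm ((v(Suc k := y)) a) = 1 \<and>
          (\<forall>b\<in>{1..<a}. (v(Suc k := y)) a \<bullet> (v(Suc k := y)) b = 0) \<and>
          (0 < \<mu> a \<longrightarrow> (v(Suc k := y)) a = (1 / sqrt (\<mu> a)) *\<^sub>R P (f a))"
        proof (cases "a = Suc k")
          case True
          then show ?thesis using yV ny yo y_def by auto
        next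
          case False
          then have ak: "a \<in> {1..k}" using a by auto
          then show ?thesis using gv False unfolding good_def by auto
        qed
      qed
      then show ?thesis by blast
    next
      case False
      have ov: "onf v {1..k}"
        by (rule onf_from_ps) (use gv in \<open>auto simp: good_def\<close>)
      obtain y where yV: "y \<in> V" and ny: "norm y = 1" and yo: "\<forall>i\<in>{1..k}. y \<bullet> v i = 0"
        using onf_ext[OF subV og Vg ov _] Suc.prems gv unfolding good_def by auto
      have "good (v(Suc k := y)) (Suc k)"
        unfolding good_def
      proof
        fix a assume a: "a \<in> {1..Suc k}"
        show "(v(Suc k := y)) a \<in> V \<and> norm ((v(Suc k := y)) a) = 1 \<and>
          (\<forall>b\<in>{1..<a}. (v(Suc k := y)) a \<bullet> (v(Suc k := y)) b = 0) \<and>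
          (0 < \<mu> a \<longrightarrow> (v(Suc k := y)) a = (1 / sqrt (\<mu> a)) *\<^sub>R P (f a))"
        proof (cases "a = Suc k")
          case True
          then show ?thesis using yV ny yo False by auto
        next
          case False
          then have ak: "a \<in> {1..k}" using a by auto
          then show ?thesis using gv False unfolding good_def by auto
        qed
      qed
      then show ?thesis by blast
    qed
  qed
  then obtain v where gv: "good v n" by blast
  define \<theta> where "\<theta> a = arccos (sqrt (\<mu> a))" for a
  have "principal_system U V n f v \<theta>"
    unfolding principal_system_def
  proof (rule ballI)
    fix j assume j: "j \<in> {1..n}"
    have gj: "v j \<in> V" "norm (v j) = 1" "\<forall>b\<in>{1..<j}. v j \<bullet> v b = 0"
        "0 < \<mu> j \<longrightarrow> v j = (1 / sqrt (\<mu> j)) *\<^sub>R P (f j)"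
      using gv j unfolding good_def by auto
    have s0: "0 \<le> sqrt (\<mu> j)" and s1: "sqrt (\<mu> j) \<le> 1" using mu0[OF j] mu1[OF j] by auto
    have fjU: "f j \<in> U" using fU j by blast
    have oo: "\<forall>i\<in>{1..<j}. f j \<bullet> f i = 0 \<and> v j \<bullet> v i = 0"
    proof
      fix i assume i: "i \<in> {1..<j}"
      then show "f j \<bullet> f i = 0 \<and> v j \<bullet> v i = 0" using of j gj(3) unfolding onf_def by auto
    qed
    have t0: "0 \<le> \<theta> j" unfolding \<theta>_def using s0 s1 by (intro arccos_lbound; linarith)
    have t1: "\<theta> j \<le> pi / 2" unfolding \<theta>_def using s0 s1 by (intro arccos_le_pi2; linarith)
    have cth: "cos (\<theta> j) = sqrt (\<mu> j)" unfolding \<theta>_def using s0 s1 by (intro cos_arccos; linarith)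
    have fv: "f j \<bullet> v j = cos (\<theta> j)"
    proof (cases "0 < \<mu> j")
      case True
      then have "f j \<bullet> v j = (f j \<bullet> P (f j)) / sqrt (\<mu> j)" using gj by simp
      also have "\<dots> = \<mu> j / sqrt (\<mu> j)" using fPf[OF j] by simp
      also have "\<dots> = sqrt (\<mu> j)" using mu0[OF j] by (rule real_div_sqrt)
      finally show ?thesis using cth by simp
    next
      case False
      then have m0: "\<mu> j = 0" using mu0[OF j] by simp
      then have "P (f j) = 0" using nPf[OF j] by simp
      moreover have "f j \<bullet> v j = P (f j) \<bullet> v j" using Pin fU j gj(1) by blast
      ultimately show ?thesis using cth m0 by simp
    qed
    have mx: "\<forall>x\<in>U. \<forall>y\<in>V. norm x = 1 \<longrightarrow> norm y = 1 \<longrightarrow>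
            (\<forall>i\<in>{1..<j}. x \<bullet> f i = 0 \<and> y \<bullet> v i = 0) \<longrightarrow> \<bar>x \<bullet> y\<bar> \<le> cos (\<theta> j)"
    proof (intro ballI impI)
      fix x y assume x: "x \<in> U" and y: "y \<in> V" and nx: "norm x = 1" and ny: "norm y = 1"
        and o: "\<forall>i\<in>{1..<j}. x \<bullet> f i = 0 \<and> y \<bullet> v i = 0"
      have xs: "x \<in> span (f ` {1..n})" using x Uf by blast
      have "(norm (P x))\<^sup>2 = P x \<bullet> P x" by (simp add: power2_norm_eq_inner)
      also have "\<dots> = (\<Sum>g=1..n. \<mu> g * (x \<bullet> f g)\<^sup>2)"
        by (rule diag_form[OF PV Pin of fU Uf Pf x])
      also have "\<dots> \<le> (\<Sum>g=1..n. \<mu> j * (x \<bullet> f g)\<^sup>2)"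
      proof (rule sum_mono)
        fix g assume g: "g \<in> {1..n}"
        show "\<mu> g * (x \<bullet> f g)\<^sup>2 \<le> \<mu> j * (x \<bullet> f g)\<^sup>2"
        proof (cases "g < j")
          case True
          then have "x \<bullet> f g = 0" using o g by auto
          then show ?thesis by simp
        next
          case False
          then have "\<mu> g \<le> \<mu> j" using mdec g j by auto
          then show ?thesis by (rule mult_right_mono) simp
        qed
      qed
      also have "\<dots> = \<mu> j * (\<Sum>g=1..n. (x \<bullet> f g) * (x \<bullet> f g))"
        by (simp add: sum_distrib_left power2_eq_square)
      also have "(\<Sum>g=1..n. (x \<bullet> f g) * (x \<bullet> f g)) = x \<bullet> x"
        using onf_parseval[OF of _ xs, of x] by simp
      also have "x \<bullet> x = 1" using nx by (simp add: power2_norm_eq_inner[symmetric])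
      finally have "(norm (P x))\<^sup>2 \<le> \<mu> j" by simp
      then have nP: "norm (P x) \<le> sqrt (\<mu> j)" by (rule real_le_rsqrt)
      have "\<bar>x \<bullet> y\<bar> = \<bar>P x \<bullet> y\<bar>" using Pin x y by metis
      also have "\<dots> \<le> norm (P x) * norm y" by (rule Cauchy_Schwarz_ineq2)
      also have "\<dots> \<le> sqrt (\<mu> j)" using nP ny by simp
      finally show "\<bar>x \<bullet> y\<bar> \<le> cos (\<theta> j)" using cth by simp
    qed
    show "f j \<in> U \<and> v j \<in> V \<and> norm (f j) = 1 \<and> norm (v j) = 1 \<and>
        (\<forall>i\<in>{1..<j}. f j \<bullet> f i = 0 \<and> v j \<bullet> v i = 0) \<and>
        0 \<le> \<theta> j \<and> \<theta> j \<le> pi / 2 \<and> f j \<bullet> v j = cos (\<theta> j) \<and>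
        (\<forall>x\<in>U. \<forall>y\<in>V. norm x = 1 \<longrightarrow> norm y = 1 \<longrightarrow>
            (\<forall>i\<in>{1..<j}. x \<bullet> f i = 0 \<and> y \<bullet> v i = 0) \<longrightarrow> \<bar>x \<bullet> y\<bar> \<le> cos (\<theta> j))"
      using fjU gj(1,2) nf[OF j] oo t0 t1 fv mx by blast
  qed
  then show ?thesis by blast
qed



lemma dim_basis_span:
  fixes S :: "'a::real_vector set"
  assumes d: "dim S = s" and s1: "1 \<le> s" and ind: "independent A" and fA: "finite A"
    and AS: "A \<subseteq> S" and cA: "card A = s"
  shows "S \<subseteq> span A"
proof -
  obtain B where B: "B \<subseteq> S" "independent B" "S \<subseteq> span B" "card B = dim S"
    by (rule basis_exists)
  have fB: "finite B"
  proof (rule ccontr)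
    assume "infinite B"
    then have "card B = 0" by simp
    with B(4) d s1 show False by simp
  qed
  show ?thesis by (rule span_fill[OF ind fA AS B(3) fB]) (use B(4) d cA in simp)
qed

theorem theorem4:
  fixes K :: "'a::real_inner \<Rightarrow> 'a"
    and S :: "'a set"
    and s :: nat
    and \<theta> :: "nat \<Rightarrow> real"
    and u v w :: "nat \<Rightarrow> 'a"
    and R :: "nat \<Rightarrow> nat \<Rightarrow> real"
    and d :: "nat \<Rightarrow> real"
    and lam :: "nat \<Rightarrow> real"
    and z :: "nat \<Rightarrow> nat \<Rightarrow> real"
  assumes lin: "linear K"
    and subS: "subspace S"
    and s_pos: "1 \<le> s"
    and dimS: "dim S = s"
    and dimKS: "dim (K ` S) = s"
    and v_in: "\<forall>i\<in>{1..s}. v i \<in> S"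
    and princ: "principal_system S (K ` S) s u (\<lambda>i. K (v i)) \<theta>"
    and cross: "\<forall>i\<in>{1..s}. \<forall>j\<in>{1..s}. u i \<bullet> K (v j) = (if i = j then cos (\<theta> i) else 0)"
    and W_on: "\<forall>i\<in>{1..s}. \<forall>j\<in>{1..s}. w i \<bullet> w j = (if i = j then 1 else 0)"
    and QR: "\<forall>j\<in>{1..s}. K (u j) = (\<Sum>i=1..j. R i j *\<^sub>R w i)"
    and d_def: "w s = (\<Sum>i=1..s. d i *\<^sub>R K (v i))"
    and eig: "\<forall>\<alpha>\<in>{1..s-1}. \<forall>i\<in>{1..s-1}.
                (\<Sum>j=1..s-1. ((if i = j then (sin (\<theta> i))\<^sup>2 else 0)
                                + (cos (\<theta> i) * d i) * (cos (\<theta> j) * d j)) * z \<alpha> j)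
                = lam \<alpha> * z \<alpha> i"
    and z_on: "\<forall>\<alpha>\<in>{1..s-1}. \<forall>\<beta>\<in>{1..s-1}.
                (\<Sum>j=1..s-1. z \<alpha> j * z \<beta> j) = (if \<alpha> = \<beta> then 1 else 0)"
    and lam_sorted: "\<forall>\<alpha>\<in>{1..s-1}. \<forall>\<beta>\<in>{1..s-1}. \<alpha> \<le> \<beta> \<longrightarrow> lam \<alpha> \<le> lam \<beta>"
  shows "(\<forall>u' v' \<theta>'. principal_system (span (u ` {1..s-1})) (K ` span (u ` {1..s-1})) (s-1) u' v' \<theta>'
            \<longrightarrow> (\<forall>\<alpha>\<in>{1..s-1}. (sin (\<theta>' \<alpha>))\<^sup>2 = lam \<alpha>))
       \<and> (\<exists>v' \<theta>'. principal_system (span (u ` {1..s-1})) (K ` span (u ` {1..s-1})) (s-1)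
                    (\<lambda>\<alpha>. \<Sum>j=1..s-1. z \<alpha> j *\<^sub>R u j) v' \<theta>')"
proof -
  define n where "n = s - 1"
  have sn: "s = Suc n" unfolding n_def using s_pos by simp
  have nn: "s - 1 = n" unfolding n_def ..
  define I where "I = {1..s}"
  define J where "J = {1..n}"
  have JI: "J \<subseteq> I" unfolding I_def J_def sn by auto
  have fI: "finite I" and fJ: "finite J" unfolding I_def J_def by auto
  have IJ: "I = insert s J" "s \<notin> J" unfolding I_def J_def sn by auto
  define kv where "kv i = K (v i)" for i
  define c where "c i = cos (\<theta> i)" for i
  have uS: "\<forall>j\<in>I. u j \<in> S" and kvS: "\<forall>j\<in>I. kv j \<in> K ` S"
    and un: "\<forall>j\<in>I. norm (u j) = 1" and kvn: "\<forall>j\<in>I. norm (kv j) = 1"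
    and uo: "\<forall>j\<in>I. \<forall>i\<in>{1..<j}. u j \<bullet> u i = 0"
    and kvo: "\<forall>j\<in>I. \<forall>i\<in>{1..<j}. kv j \<bullet> kv i = 0"
    using princ unfolding principal_system_def I_def kv_def by auto
  have ou: "onf u I" unfolding I_def by (rule onf_from_ps) (use un uo in \<open>auto simp: I_def\<close>)
  have okv: "onf kv I" unfolding I_def by (rule onf_from_ps) (use kvn kvo in \<open>auto simp: I_def\<close>)
  have ow: "onf w I" unfolding onf_def I_def using W_on by blast
  have cr: "\<forall>i\<in>I. \<forall>j\<in>I. u i \<bullet> kv j = (if i = j then c i else 0)"
    using cross unfolding I_def kv_def c_def by blast
  have cardI: "card I = s" unfolding I_def by simp
  have cardJ: "card J = n" unfolding J_def by simp
  have subKS: "subspace (K ` S)" by (rule real_vector.linear_subspace_image[OF lin subS])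
  have S_span: "S \<subseteq> span (u ` I)"
    by (rule dim_basis_span[OF dimS s_pos onf_indep[OF ou]]) (use fI uS onf_card[OF ou] cardI in auto)
  have S_eq: "S = span (u ` I)"
    using S_span span_minimal[OF _ subS, of "u ` I"] uS by blast
  have KS_eq: "K ` S = span (K ` u ` I)"
    unfolding S_eq by (rule real_vector.linear_span_image[OF lin, symmetric])
  have Kuw: "K (u j) \<in> span (w ` {1..j})" if "j \<in> I" for j
  proof -
    have "K (u j) = (\<Sum>i=1..j. R i j *\<^sub>R w i)" using QR that unfolding I_def by blast
    also have "\<dots> \<in> span (w ` {1..j})" by (intro span_sum span_scale span_base) auto
    finally show ?thesis .
  qed
  have KS_w: "K ` S \<subseteq> span (w ` I)"
  proof -
    have "K ` u ` I \<subseteq> span (w ` I)"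
    proof
      fix y assume "y \<in> K ` u ` I"
      then obtain j where j: "j \<in> I" "y = K (u j)" by blast
      have "span (w ` {1..j}) \<subseteq> span (w ` I)" using j(1) unfolding I_def by (intro span_mono) auto
      then show "y \<in> span (w ` I)" using Kuw[OF j(1)] j(2) by blast
    qed
    then show ?thesis unfolding KS_eq by (rule span_minimal[OF _ subspace_span])
  qed
  have w_kv: "span (w ` I) \<subseteq> span (kv ` I)"
    by (rule span_fill[OF onf_indep[OF okv]]) (use fI kvS KS_w card_image_le[OF fI, of w] onf_card[OF okv] cardI in auto)
  have kv_w: "kv i \<in> span (w ` I)" if "i \<in> I" for i using kvS KS_w that by blast
  have w_in_kv: "w i \<in> span (kv ` I)" if "i \<in> I" for i using w_kv that span_base by blast
  have PS: "(\<Sum>i\<in>I. (x \<bullet> w i) * (x' \<bullet> w i)) = (\<Sum>k\<in>I. (x \<bullet> kv k) * (x' \<bullet> kv k))" for x x'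
  proof -
    define pw where "pw = (\<Sum>i\<in>I. (x \<bullet> w i) *\<^sub>R w i)"
    have pws: "pw \<in> span (kv ` I)" unfolding pw_def
      by (intro span_sum span_scale) (use w_in_kv in auto)
    have "(\<Sum>i\<in>I. (x \<bullet> w i) * (x' \<bullet> w i)) = pw \<bullet> x'"
      unfolding pw_def inner_sum_left inner_scaleR_left by (rule sum.cong) (auto simp: inner_commute)
    also have "\<dots> = (\<Sum>k\<in>I. (pw \<bullet> kv k) * (x' \<bullet> kv k))" by (rule onf_parseval[OF okv fI pws])
    also have "\<dots> = (\<Sum>k\<in>I. (x \<bullet> kv k) * (x' \<bullet> kv k))"
    proof (rule sum.cong[OF refl])
      fix k assume k: "k \<in> I"
      have "pw \<bullet> kv k = (\<Sum>i\<in>I. (x \<bullet> w i) * (kv k \<bullet> w i))"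
        unfolding pw_def inner_sum_left inner_scaleR_left by (rule sum.cong) (auto simp: inner_commute)
      also have "\<dots> = kv k \<bullet> x" using onf_parseval[OF ow fI kv_w[OF k], of x] by (simp add: mult.commute)
      finally show "(pw \<bullet> kv k) * (x' \<bullet> kv k) = (x \<bullet> kv k) * (x' \<bullet> kv k)" by (simp add: inner_commute)
    qed
    finally show ?thesis .
  qed
  define U' where "U' = span (u ` J)"
  define V' where "V' = K ` U'"
  have subU: "subspace U'" unfolding U'_def by (rule subspace_span)
  have subV: "subspace V'" unfolding V'_def by (rule real_vector.linear_subspace_image[OF lin subU])
  have V'_eq: "V' = span (K ` u ` J)" unfolding V'_def U'_def by (rule real_vector.linear_span_image[OF lin, symmetric])
  have V'_w: "V' \<subseteq> span (w ` J)"
  proof -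
    have "K ` u ` J \<subseteq> span (w ` J)"
    proof
      fix y assume "y \<in> K ` u ` J"
      then obtain j where j: "j \<in> J" "y = K (u j)" by blast
      have jI: "j \<in> I" using j(1) JI by blast
      have "span (w ` {1..j}) \<subseteq> span (w ` J)" using j(1) unfolding J_def by (intro span_mono) auto
      then show "y \<in> span (w ` J)" using Kuw[OF jI] j(2) by blast
    qed
    then show ?thesis unfolding V'_eq by (rule span_minimal[OF _ subspace_span])
  qed
  have indC: "independent (K ` u ` I)" and injC: "inj_on (\<lambda>i. K (u i)) I"
  proof -
    define C where "C = K ` u ` I"
    have fC: "finite C" unfolding C_def using fI by simp
    have cC: "card C \<le> s" unfolding C_def using card_image_le[OF fI, of "\<lambda>i. K (u i)"] cardI
      by (simp add: image_image)
    obtain A where A: "A \<subseteq> C" "independent A" "C \<subseteq> span A" by (rule maximal_independent_subset)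
    have "span A = span C" using A span_mono[OF A(1)] span_minimal[OF A(3) subspace_span] by blast
    then have "span A = span (K ` S)" unfolding C_def KS_eq by (simp add: span_span)
    then have "dim (K ` S) = card A" by (rule dim_eq_card[OF _ A(2)])
    then have cA: "card A = s" using dimKS by simp
    have "A = C" using card_subset_eq[OF fC A(1)] cA cC card_mono[OF fC A(1)] by simp
    then show "independent (K ` u ` I)" using A(2) unfolding C_def by simp
    have "card ((\<lambda>i. K (u i)) ` I) = card I" using \<open>A = C\<close> cA cC cardI unfolding C_def by (simp add: image_image)
    then show "inj_on (\<lambda>i. K (u i)) I" using inj_on_iff_eq_card[OF fI] by blast
  qed
  have w_V': "span (w ` J) \<subseteq> V'"
  proof -
    have indJ: "independent (K ` u ` J)" by (rule independent_mono[OF indC]) (use JI in auto)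
    have cJ: "card (K ` u ` J) = n"
    proof -
      have "inj_on (\<lambda>i. K (u i)) J" using inj_on_subset[OF injC JI] .
      then have "card ((\<lambda>i. K (u i)) ` J) = card J" by (rule card_image)
      then show ?thesis using cardJ by (simp add: image_image)
    qed
    have sub: "K ` u ` J \<subseteq> span (w ` J)" by (rule order_trans[OF span_superset V'_w[unfolded V'_eq]])
    have "span (w ` J) \<subseteq> span (K ` u ` J)"
      by (rule span_fill[OF indJ _ sub]) (use fJ card_image_le[OF fJ, of w] cJ cardJ in auto)
    then show ?thesis using V'_eq by simp
  qed
  have V'_eqw: "V' = span (w ` J)" using V'_w w_V' by blast
  have owJ: "onf w J" by (rule onf_mono[OF ow JI])
  have ouJ: "onf u J" by (rule onf_mono[OF ou JI])
  define P where "P x = (\<Sum>i\<in>J. (x \<bullet> w i) *\<^sub>R w i)" for x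
  have PV: "\<forall>x\<in>U'. P x \<in> V'" unfolding V'_eqw P_def by (intro ballI span_sum span_scale span_base) auto
  have Pin: "\<forall>x\<in>U'. \<forall>y\<in>V'. x \<bullet> y = P x \<bullet> y"
  proof (intro ballI)
    fix x y assume "x \<in> U'" "y \<in> V'"
    then have ys: "y \<in> span (w ` J)" using V'_eqw by simp
    have "x \<bullet> y = (\<Sum>i\<in>J. (y \<bullet> w i) * (x \<bullet> w i))" using onf_parseval[OF owJ fJ ys, of x] by (simp add: inner_commute)
    also have "\<dots> = P x \<bullet> y" unfolding P_def inner_sum_left inner_scaleR_left
      by (rule sum.cong) (auto simp: inner_commute)
    finally show "x \<bullet> y = P x \<bullet> y" .
  qed
  define f where "f \<alpha> = (\<Sum>j\<in>J. z \<alpha> j *\<^sub>R u j)" for \<alpha>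
  have f_eq: "(\<lambda>\<alpha>. \<Sum>j=1..n. z \<alpha> j *\<^sub>R u j) = f" unfolding f_def J_def ..
  have zo: "\<forall>\<alpha>\<in>J. \<forall>\<beta>\<in>J. (\<Sum>j\<in>J. z \<alpha> j * z \<beta> j) = (if \<alpha> = \<beta> then 1 else 0)"
    using z_on unfolding nn J_def .
  have fu: "f \<alpha> \<bullet> u k = z \<alpha> k" if "k \<in> J" for \<alpha> k
    unfolding f_def by (rule onf_sum_inner[OF ouJ fJ that])
  have of: "onf f J" unfolding onf_def
  proof (intro ballI)
    fix a b assume a: "a \<in> J" and b: "b \<in> J"
    have "f a \<bullet> f b = (\<Sum>k\<in>J. z b k * (f a \<bullet> u k))" unfolding f_def[of b] by (simp add: inner_sum_right)
    also have "\<dots> = (\<Sum>k\<in>J. z a k * z b k)" using fu by (simp add: mult.commute)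
    finally show "f a \<bullet> f b = (if a = b then 1 else 0)" using zo a b by simp
  qed
  have fU: "\<forall>i\<in>J. f i \<in> U'" unfolding U'_def f_def by (intro ballI span_sum span_scale span_base) auto
  have Uf: "U' \<subseteq> span (f ` J)" unfolding U'_def
    by (rule span_fill[OF onf_indep[OF of]]) (use fJ fU card_image_le[OF fJ, of u] onf_card[OF of] cardJ U'_def in auto)
  define A where "A \<alpha> = (\<Sum>j\<in>J. cos (\<theta> j) * d j * z \<alpha> j)" for \<alpha>
  have fkv: "f \<alpha> \<bullet> kv k = (if k \<in> J then z \<alpha> k * c k else 0)" if k: "k \<in> I" for \<alpha> k
  proof -
    have "f \<alpha> \<bullet> kv k = (\<Sum>j\<in>J. z \<alpha> j * (u j \<bullet> kv k))" unfolding f_def by (simp add: inner_sum_left)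
    also have "\<dots> = (\<Sum>j\<in>J. if j = k then z \<alpha> j * c j else 0)"
      by (rule sum.cong[OF refl]) (use cr JI k in auto)
    also have "\<dots> = (if k \<in> J then z \<alpha> k * c k else 0)" using fJ by (simp add: sum.delta')
    finally show ?thesis .
  qed
  have fws: "f \<alpha> \<bullet> w s = A \<alpha>" for \<alpha>
  proof -
    have "f \<alpha> \<bullet> w s = (\<Sum>k\<in>I. d k * (f \<alpha> \<bullet> kv k))"
      unfolding d_def I_def kv_def by (simp add: inner_sum_right)
    also have "\<dots> = (\<Sum>k\<in>I. if k \<in> J then d k * (z \<alpha> k * c k) else 0)"
      by (rule sum.cong[OF refl]) (simp add: fkv)
    also have "\<dots> = (\<Sum>k\<in>J. d k * (z \<alpha> k * c k))"
      using fI JI by (simp add: sum.If_cases Int_absorb1)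
    also have "\<dots> = A \<alpha>" unfolding A_def c_def by (rule sum.cong) auto
    finally show ?thesis .
  qed
  have G: "f a \<bullet> P (f b) = (\<Sum>k\<in>J. z a k * z b k * (c k)\<^sup>2) - A a * A b" for a b
  proof -
    have "f a \<bullet> P (f b) = (\<Sum>i\<in>J. (f a \<bullet> w i) * (f b \<bullet> w i))"
      unfolding P_def by (simp add: inner_sum_right mult.commute)
    also have "\<dots> = (\<Sum>i\<in>I. (f a \<bullet> w i) * (f b \<bullet> w i)) - (f a \<bullet> w s) * (f b \<bullet> w s)"
      using IJ fJ by simp
    also have "(\<Sum>i\<in>I. (f a \<bullet> w i) * (f b \<bullet> w i)) = (\<Sum>k\<in>I. (f a \<bullet> kv k) * (f b \<bullet> kv k))" by (rule PS)
    also have "\<dots> = (\<Sum>k\<in>I. if k \<in> J then z a k * z b k * (c k)\<^sup>2 else 0)"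
      by (rule sum.cong[OF refl]) (simp add: fkv power2_eq_square)
    also have "\<dots> = (\<Sum>k\<in>J. z a k * z b k * (c k)\<^sup>2)"
      using fI JI by (simp add: sum.If_cases Int_absorb1)
    finally show ?thesis using fws by simp
  qed
  have eigJ: "\<forall>\<alpha>\<in>J. \<forall>i\<in>J. (\<Sum>j\<in>J. ((if i = j then (sin (\<theta> i))\<^sup>2 else 0)
                                + (cos (\<theta> i) * d i) * (cos (\<theta> j) * d j)) * z \<alpha> j) = lam \<alpha> * z \<alpha> i"
    using eig unfolding nn J_def .
  have E: "(\<Sum>i\<in>J. z a i * z b i * (sin (\<theta> i))\<^sup>2) + A a * A b = lam b * (if a = b then 1 else 0)"
    if a: "a \<in> J" and b: "b \<in> J" for a b
  proof -
    have row: "(sin (\<theta> i))\<^sup>2 * z b i + cos (\<theta> i) * d i * A b = lam b * z b i" if i: "i \<in> J" for i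
    proof -
      have "(\<Sum>j\<in>J. ((if i = j then (sin (\<theta> i))\<^sup>2 else 0) + (cos (\<theta> i) * d i) * (cos (\<theta> j) * d j)) * z b j)
          = (\<Sum>j\<in>J. (if i = j then (sin (\<theta> i))\<^sup>2 * z b j else 0) + cos (\<theta> i) * d i * (cos (\<theta> j) * d j * z b j))"
        by (rule sum.cong) (simp_all add: distrib_right mult.assoc)
      also have "\<dots> = (\<Sum>j\<in>J. (if i = j then (sin (\<theta> i))\<^sup>2 * z b j else 0)) + (\<Sum>j\<in>J. cos (\<theta> i) * d i * (cos (\<theta> j) * d j * z b j))"
        by (rule sum.distrib)
      also have "(\<Sum>j\<in>J. (if i = j then (sin (\<theta> i))\<^sup>2 * z b j else 0)) = (sin (\<theta> i))\<^sup>2 * z b i"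
        using i fJ by (simp add: sum.delta)
      also have "(\<Sum>j\<in>J. cos (\<theta> i) * d i * (cos (\<theta> j) * d j * z b j)) = cos (\<theta> i) * d i * A b"
        unfolding A_def by (simp only: sum_distrib_left)
      finally show ?thesis using eigJ b i by simp
    qed
    have "(\<Sum>i\<in>J. z a i * ((sin (\<theta> i))\<^sup>2 * z b i + cos (\<theta> i) * d i * A b)) = (\<Sum>i\<in>J. z a i * (lam b * z b i))"
      using row by simp
    also have "\<dots> = lam b * (\<Sum>i\<in>J. z a i * z b i)" by (simp add: sum_distrib_left algebra_simps)
    also have "\<dots> = lam b * (if a = b then 1 else 0)" using zo a b by simp
    finally have "(\<Sum>i\<in>J. z a i * ((sin (\<theta> i))\<^sup>2 * z b i + cos (\<theta> i) * d i * A b)) = lam b * (if a = b then 1 else 0)" .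
    moreover have "(\<Sum>i\<in>J. z a i * ((sin (\<theta> i))\<^sup>2 * z b i + cos (\<theta> i) * d i * A b))
        = (\<Sum>i\<in>J. z a i * z b i * (sin (\<theta> i))\<^sup>2 + (cos (\<theta> i) * d i * z a i) * A b)"
      by (rule sum.cong) (simp_all add: algebra_simps)
    moreover have "\<dots> = (\<Sum>i\<in>J. z a i * z b i * (sin (\<theta> i))\<^sup>2) + (\<Sum>i\<in>J. cos (\<theta> i) * d i * z a i) * A b"
      by (simp only: sum.distrib sum_distrib_right)
    moreover have "(\<Sum>i\<in>J. cos (\<theta> i) * d i * z a i) = A a" unfolding A_def ..
    ultimately show ?thesis by simp
  qed
  have Pf: "\<forall>a\<in>J. \<forall>b\<in>J. P (f a) \<bullet> P (f b) = (if a = b then 1 - lam a else 0)"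
  proof (intro ballI)
    fix a b assume a: "a \<in> J" and b: "b \<in> J"
    have "P (f a) \<bullet> P (f b) = f a \<bullet> P (f b)" using Pin fU PV a b by metis
    also have "\<dots> = (\<Sum>k\<in>J. z a k * z b k * (c k)\<^sup>2) - A a * A b" by (rule G)
    also have "(\<Sum>k\<in>J. z a k * z b k * (c k)\<^sup>2) = (\<Sum>k\<in>J. z a k * z b k) - (\<Sum>k\<in>J. z a k * z b k * (sin (\<theta> k))\<^sup>2)"
    proof -
      have "(\<Sum>k\<in>J. z a k * z b k * (c k)\<^sup>2) = (\<Sum>k\<in>J. z a k * z b k - z a k * z b k * (sin (\<theta> k))\<^sup>2)"
        by (rule sum.cong) (simp_all add: c_def cos_squared_eq right_diff_distrib)
      then show ?thesis by (simp only: sum_subtractf)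
    qed
    finally show "P (f a) \<bullet> P (f b) = (if a = b then 1 - lam a else 0)" using E[OF a b] zo a b by auto
  qed
  have mdec: "\<forall>a\<in>J. \<forall>b\<in>J. a \<le> b \<longrightarrow> 1 - lam b \<le> 1 - lam a"
  proof (intro ballI impI)
    fix a b assume "a \<in> J" "b \<in> J" "a \<le> b"
    then have "lam a \<le> lam b" using lam_sorted unfolding nn J_def by blast
    then show "1 - lam b \<le> 1 - lam a" by simp
  qed
  have part1: "\<forall>u' v' \<theta>'. principal_system U' V' n u' v' \<theta>' \<longrightarrow> (\<forall>\<alpha>\<in>J. (sin (\<theta>' \<alpha>))\<^sup>2 = lam \<alpha>)"
  proof (intro allI impI)
    fix u' v' \<theta>' assume ps: "principal_system U' V' n u' v' \<theta>'"
    have "\<forall>\<alpha>\<in>{1..n}. (cos (\<theta>' \<alpha>))\<^sup>2 = 1 - lam \<alpha>"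
      by (rule ps_unique[OF subU subV PV Pin of[unfolded J_def] fU[unfolded J_def] Uf[unfolded J_def]
            Pf[unfolded J_def] mdec[unfolded J_def] ps])
    then show "\<forall>\<alpha>\<in>J. (sin (\<theta>' \<alpha>))\<^sup>2 = lam \<alpha>" unfolding J_def by (simp add: sin_squared_eq)
  qed
  have part2: "\<exists>v' \<theta>'. principal_system U' V' n f v' \<theta>'"
    by (rule ps_exists[OF subU subV PV Pin of[unfolded J_def] fU[unfolded J_def] Uf[unfolded J_def]
            Pf[unfolded J_def] mdec[unfolded J_def] owJ[unfolded J_def] V'_eqw[unfolded J_def]])
  show ?thesis unfolding nn f_eq using part1 part2 unfolding U'_def V'_def J_def by blast
qed

end
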